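(* For all $s$ with $\mathrm{Re}(s)>\tfrac12$, the integral $\int_0^\infty\vartheta(u)K_C(s,u)\,du$ converges absolutely and $$\exp\left[\int_0^\infty\vartheta(u)\,K_C(s,u)\,du\right]=\Gamma\!\left(\frac s2\right)\pi^{-s/2},\qquad K_C(s,u):=\frac{2}{\pi}\,\frac{s(s-1)\,u}{\bigl(u^2+(s-\tfrac12)^2\bigr)(u^2+\tfrac14)}.$$
   Context: The function $\vartheta:\mathbb R\to\mathbb R$ is $$\vartheta(t):=-\arctan(2t)-\frac t2(\gamma+\log\pi)+\sum_{k=1}^\infty\left\{\frac{t}{2k}-\arctan\frac{t}{2k+\frac12}\right\},$$ with $\gamma$ Euler's constant. *)

theory Defs
  imports "HOL-Analysis.Analysis"
begin

definition vartheta :: "real \<Rightarrow> real" where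
  "vartheta t = - arctan (2 * t) - t / 2 * (euler_mascheroni + ln pi)
     + (\<Sum>k. t / (2 * real (Suc k)) - arctan (t / (2 * real (Suc k) + 1 / 2)))"

definition K_C :: "complex \<Rightarrow> real \<Rightarrow> complex" where
  "K_C s u = (2 / of_real pi) * (s * (s - 1) * of_real u) /
     ((of_real (u\<^sup>2) + (s - 1 / 2)\<^sup>2) * of_real (u\<^sup>2 + 1 / 4))"

end

theory Submission
  imports Defs "HOL-Real_Asymp.Real_Asymp"
begin

lemma int_pow32: "set_integrable lborel {1<..} (\<lambda>u::real. 1/(u * sqrt u) :: real)"
proof -
  have "set_integrable lborel (einterval (ereal 1) \<infinity>) (\<lambda>u::real. 1/(u * sqrt u) :: real)"
  proof (rule interval_integral_FTC_nonneg[where F="\<lambda>x. - 2 / sqrt x" and A="-2" and B=0])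
    show "ereal 1 < \<infinity>" by simp
    fix x assume "ereal 1 < ereal x" "ereal x < \<infinity>"
    hence x: "x > 1" by simp
    show "((\<lambda>x. - 2 / sqrt x) has_real_derivative 1 / (x * sqrt x)) (at x)"
      using x by (auto intro!: derivative_eq_intros simp: field_simps)
    show "isCont (\<lambda>u. 1 / (u * sqrt u)) x" using x by (auto intro!: continuous_intros)
  next
    show "AE x in lborel. ereal 1 < ereal x \<longrightarrow> ereal x < \<infinity> \<longrightarrow> 0 \<le> 1 / (x * sqrt x)"
      by auto
    show "(((\<lambda>x. - 2 / sqrt x) \<circ> real_of_ereal) \<longlongrightarrow> - 2) (at_right (ereal 1))"
      unfolding ereal_tendsto_simps by (auto intro!: tendsto_eq_intros)
    show "(((\<lambda>x. - 2 / sqrt x) \<circ> real_of_ereal) \<longlongrightarrow> 0) (at_left \<infinity>)"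
      unfolding ereal_tendsto_simps
      by (intro tendsto_divide_0[OF tendsto_const] filterlim_compose[OF filterlim_at_top_imp_at_infinity[OF sqrt_at_top]] filterlim_ident)
  qed
  moreover have "einterval (ereal 1) \<infinity> = {1::real<..}" by (auto simp: einterval_def)
  ultimately show ?thesis by simp
qed

lemma integrable_crit:
  fixes f :: "real \<Rightarrow> 'a::{banach, second_countable_topology}"
  assumes a: "0 \<le> a" and cont: "continuous_on {a..} f"
    and bnd: "\<And>u. 1 \<le> u \<Longrightarrow> norm (f u) \<le> C / (u * sqrt u)"
  shows "set_integrable lborel {a<..} f"
proof -
  let ?m = "max a 1"
  have i1: "set_integrable lborel {a..?m} f"
    by (rule borel_integrable_atLeastAtMost') (rule continuous_on_subset[OF cont], auto)
  have "set_integrable lborel {1<..} (\<lambda>u::real. C * (1/(u * sqrt u)))"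
    using int_pow32 by (rule set_integrable_mult_right)
  hence "set_integrable lborel {?m<..} (\<lambda>u::real. C * (1/(u * sqrt u)))"
    by (rule set_integrable_subset) auto
  hence i2: "set_integrable lborel {?m<..} f"
  proof (rule set_integrable_bound)
    show "set_borel_measurable lborel {max a 1<..} f"
      unfolding set_borel_measurable_def measurable_lborel2
      by (rule borel_measurable_continuous_on_indicator) (auto intro!: continuous_on_subset[OF cont])
    have "norm (f x) \<le> norm (C * (1 / (x * sqrt x)))" if x: "x > max a 1" for x
    proof -
      have "norm (f x) \<le> C / (x * sqrt x)" using x by (intro bnd) auto
      also have "\<dots> \<le> \<bar>C\<bar> / (x * sqrt x)" using x by (intro divide_right_mono) auto
      also have "\<dots> = norm (C * (1 / (x * sqrt x)))" using x by (simp add: abs_mult)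
      finally show ?thesis .
    qed
    thus "AE x\<in>{max a 1<..} in lborel. norm (f x) \<le> norm (C * (1 / (x * sqrt x)))"
      by (auto intro!: AE_I2)
  qed
  have "set_integrable lborel ({a..?m} \<union> {?m<..}) f"
    using i1 i2 by (rule set_integrable_Un) auto
  thus ?thesis by (rule set_integrable_subset) auto
qed

lemma sq_plus_lb:
  fixes c :: complex and u :: real
  assumes "Re c > 0"
  shows "Re c * (u^2 + (cmod c)^2) \<le> cmod (of_real u ^ 2 + c ^ 2) * cmod c"
proof -
  define p q where "p = Re c" and "q = Im c"
  have r: "Re (of_real u ^ 2 + c ^ 2) = u^2 + p^2 - q^2" "Im (of_real u ^ 2 + c ^ 2) = 2*p*q"
    by (simp_all add: power2_eq_square p_def q_def)
  have w: "(cmod (of_real u ^ 2 + c ^ 2))^2 = (u^2 + p^2 - q^2)^2 + (2*p*q)^2"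
    by (simp only: cmod_power2 r)
  have cc: "(cmod c)^2 = p^2 + q^2" by (simp add: cmod_power2 p_def q_def)
  have "(Re c * (u^2 + (cmod c)^2))^2 \<le> (cmod (of_real u ^ 2 + c ^ 2) * cmod c)^2"
  proof -
    have "(cmod (of_real u ^ 2 + c ^ 2) * cmod c)^2 - (Re c * (u^2 + (cmod c)^2))^2
        = q^2 * (u^2 - p^2 - q^2)^2"
      unfolding power_mult_distrib w cc p_def[symmetric] by (simp add: power2_eq_square algebra_simps)
    moreover have "q^2 * (u^2 - p^2 - q^2)^2 \<ge> 0" by simp
    ultimately show ?thesis by linarith
  qed
  thus ?thesis by (rule power2_le_imp_le) simp
qed

lemma cmod_pos: "Re c > 0 \<Longrightarrow> cmod c > 0"
  by (auto simp: complex_eq_iff)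

lemma sq_plus_nz:
  fixes c :: complex and u :: real
  assumes "Re c > 0"
  shows "of_real u ^ 2 + c ^ 2 \<noteq> 0"
proof
  assume "of_real u ^ 2 + c ^ 2 = 0"
  with sq_plus_lb[OF assms, of u] have "Re c * (u^2 + (cmod c)^2) \<le> 0" by simp
  moreover have "u^2 + (cmod c)^2 > 0" using cmod_pos[OF assms]
    by (simp add: add_nonneg_pos)
  ultimately show False using assms by (simp add: mult_le_0_iff)
qed

lemma sq_plus_inv_bound:
  fixes c :: complex and u :: real
  assumes c: "Re c > 0"
  shows "cmod (1 / (of_real u ^ 2 + c ^ 2)) \<le> (cmod c / Re c) / (u^2 + (cmod c)^2)"
proof -
  have cpos: "cmod c > 0" by (rule cmod_pos[OF c])
  have pos: "u^2 + (cmod c)^2 > 0" using cpos by (simp add: add_nonneg_pos)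
  have "Re c * (u^2 + (cmod c)^2) / cmod c \<le> cmod (of_real u ^ 2 + c ^ 2)"
    using sq_plus_lb[OF c, of u] cpos by (simp add: pos_divide_le_eq)
  hence "1 / cmod (of_real u ^ 2 + c ^ 2) \<le> 1 / (Re c * (u^2 + (cmod c)^2) / cmod c)"
    using pos cpos c sq_plus_nz[OF c, of u] by (intro divide_left_mono) auto
  also have "\<dots> = (cmod c / Re c) / (u^2 + (cmod c)^2)" by simp
  finally show ?thesis by (simp add: norm_divide)
qed

lemma sqrt_le_self': "1 \<le> u \<Longrightarrow> sqrt u \<le> (u::real)"
proof -
  assume u: "1 \<le> u"
  have "1 \<le> sqrt u" using u by simp
  hence "sqrt u * 1 \<le> sqrt u * sqrt u" by (intro mult_left_mono) auto
  thus ?thesis using u by simp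
qed

lemma E_integrable:
  fixes c :: complex
  assumes c: "Re c > 0"
  shows "set_integrable lborel {0<..} (\<lambda>u::real. 1 / (of_real u ^ 2 + c ^ 2))"
proof (rule integrable_crit[where C="cmod c / Re c"])
  show "continuous_on {0..} (\<lambda>u::real. 1 / (of_real u ^ 2 + c ^ 2))"
    using sq_plus_nz[OF c] by (auto intro!: continuous_intros)
  fix u :: real assume u: "1 \<le> u"
  have "cmod (1 / (of_real u ^ 2 + c ^ 2)) \<le> (cmod c / Re c) / (u^2 + (cmod c)^2)"
    by (rule sq_plus_inv_bound[OF c])
  also have "\<dots> \<le> (cmod c / Re c) / (u * sqrt u)"
  proof (rule divide_left_mono)
    have "u * sqrt u \<le> u * u" using u sqrt_le_self'[OF u] by (intro mult_left_mono) auto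
    also have "\<dots> \<le> u^2 + (cmod c)^2" by (simp add: power2_eq_square)
    finally show "u * sqrt u \<le> u^2 + (cmod c)^2" .
    show "0 \<le> cmod c / Re c" using c by simp
    show "0 < (u^2 + (cmod c)^2) * (u * sqrt u)" using u by (intro mult_pos_pos) (auto intro: add_pos_nonneg)
  qed
  finally show "cmod (1 / (of_real u ^ 2 + c ^ 2)) \<le> (cmod c / Re c) / (u * sqrt u)" .
qed simp

lemma Ln_notin_aux: "Im z \<noteq> 0 \<Longrightarrow> z \<notin> \<real>\<^sub>\<le>\<^sub>0"
  by (simp add: complex_nonpos_Reals_iff)

lemma E_value:
  fixes c :: complex
  assumes c: "Re c > 0"
  shows "(LBINT u:{0<..}. 1 / (of_real u ^ 2 + c ^ 2)) = of_real pi / (2 * c)"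
proof -
  have c0: "c \<noteq> 0" using c by auto
  define G where "G z = (Ln (z - \<i> * c) - Ln (z + \<i> * c)) / (2 * \<i> * c)" for z
  have nz1: "of_real x - \<i> * c \<notin> \<real>\<^sub>\<le>\<^sub>0" for x :: real
    using c by (intro Ln_notin_aux) simp
  have nz2: "of_real x + \<i> * c \<notin> \<real>\<^sub>\<le>\<^sub>0" for x :: real
    using c by (intro Ln_notin_aux) simp
  have dG: "(G has_field_derivative 1 / (of_real x ^ 2 + c ^ 2)) (at (of_real x))" for x :: real
  proof -
    have a: "of_real x - \<i> * c \<noteq> 0" "of_real x + \<i> * c \<noteq> 0" using nz1[of x] nz2[of x] by auto
    have d1: "((\<lambda>z. Ln (z - \<i> * c)) has_field_derivative inverse (of_real x - \<i> * c) * 1) (at (of_real x))"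
      by (rule DERIV_chain2[where f=Ln and g="\<lambda>z. z - \<i> * c", OF has_field_derivative_Ln[OF nz1[of x]]]) (auto intro!: derivative_eq_intros)
    have d2: "((\<lambda>z. Ln (z + \<i> * c)) has_field_derivative inverse (of_real x + \<i> * c) * 1) (at (of_real x))"
      by (rule DERIV_chain2[where f=Ln and g="\<lambda>z. z + \<i> * c", OF has_field_derivative_Ln[OF nz2[of x]]]) (auto intro!: derivative_eq_intros)
    have "(G has_field_derivative (inverse (of_real x - \<i> * c) * 1 - inverse (of_real x + \<i> * c) * 1) / (2 * \<i> * c)) (at (of_real x))"
      unfolding G_def by (intro DERIV_cdivide DERIV_diff d1 d2)
    moreover have "(inverse (of_real x - \<i> * c) * 1 - inverse (of_real x + \<i> * c) * 1) / (2 * \<i> * c)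
       = 1 / (of_real x ^ 2 + c ^ 2)"
    proof -
      have pq: "(of_real x - \<i> * c) * (of_real x + \<i> * c) = of_real x ^ 2 + c ^ 2"
        by (simp add: algebra_simps power2_eq_square)
      have "inverse (of_real x - \<i> * c) * 1 - inverse (of_real x + \<i> * c) * 1
          = ((of_real x + \<i> * c) - (of_real x - \<i> * c)) / ((of_real x - \<i> * c) * (of_real x + \<i> * c))"
        using a by (simp add: inverse_eq_divide diff_frac_eq)
      also have "\<dots> = (2 * \<i> * c) / (of_real x ^ 2 + c ^ 2)" unfolding pq by simp
      finally show ?thesis using c0 by simp
    qed
    ultimately show ?thesis by simp
  qed
  have contG: "isCont G (of_real x)" for x :: real
    using dG[of x] by (rule DERIV_isCont)
  have G0: "G 0 = - of_real pi / (2 * c)"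
  proof -
    have "Ln (- (\<i> * c)) = Ln (\<i> * c) - \<i> * of_real pi"
      using c c0 by (subst Ln_minus) auto
    hence "G 0 = (- (\<i> * of_real pi)) / (2 * \<i> * c)" unfolding G_def by simp
    also have "\<dots> = - of_real pi / (2 * c)" using c0 by (simp add: field_simps)
    finally show ?thesis .
  qed
  have lim: "((\<lambda>x::real. G (of_real x)) \<longlongrightarrow> 0) at_top"
  proof -
    have ev: "eventually (\<lambda>x::real. G (of_real x) =
        (Ln (1 - \<i> * c / of_real x) - Ln (1 + \<i> * c / of_real x)) / (2 * \<i> * c)) at_top"
      using eventually_gt_at_top[of 0]
    proof eventually_elim
      case (elim x)
      have e1: "of_real x - \<i> * c = of_real x * (1 - \<i> * c / of_real x)" using elim by (simp add: field_simps)
      have e2: "of_real x + \<i> * c = of_real x * (1 + \<i> * c / of_real x)" using elim by (simp add: field_simps)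
      have n1: "1 - \<i> * c / of_real x \<noteq> 0" using nz1[of x] elim e1 by auto
      have n2: "1 + \<i> * c / of_real x \<noteq> 0" using nz2[of x] elim e2 by auto
      show ?case unfolding G_def e1 e2 using elim n1 n2 by (simp add: Ln_times_of_real)
    qed
    have t: "((\<lambda>x::real. \<i> * c / of_real x) \<longlongrightarrow> 0) at_top"
    proof -
      have "((\<lambda>x::real. of_real (1/x) * (\<i> * c)) \<longlongrightarrow> of_real 0 * (\<i> * c)) at_top"
        by (intro tendsto_intros tendsto_divide_0[OF tendsto_const] filterlim_at_top_imp_at_infinity filterlim_ident)
      thus ?thesis by (simp add: divide_inverse mult.commute)
    qed
    have "((\<lambda>x::real. (Ln (1 - \<i> * c / of_real x) - Ln (1 + \<i> * c / of_real x)) / (2 * \<i> * c))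
        \<longlongrightarrow> (Ln (1 - 0) - Ln (1 + 0)) / (2 * \<i> * c)) at_top"
      using c0 by (intro tendsto_intros tendsto_Ln t) (auto simp: complex_nonpos_Reals_iff)
    hence "((\<lambda>x::real. (Ln (1 - \<i> * c / of_real x) - Ln (1 + \<i> * c / of_real x)) / (2 * \<i> * c))
        \<longlongrightarrow> 0) at_top" by simp
    thus ?thesis using tendsto_cong[OF ev] by simp
  qed
  have "(LBINT u=ereal 0..\<infinity>. 1 / (of_real u ^ 2 + c ^ 2)) = 0 - G 0"
  proof (rule interval_integral_FTC_integrable[where F="\<lambda>x. G (of_real x)"])
    show "ereal 0 < \<infinity>" by simp
    fix x assume "ereal 0 < ereal x" "ereal x < \<infinity>"
    show "((\<lambda>x. G (of_real x)) has_vector_derivative 1 / (of_real x ^ 2 + c ^ 2)) (at x)"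
      by (rule has_vector_derivative_real_field[OF dG])
    show "isCont (\<lambda>u. 1 / (complex_of_real u ^ 2 + c ^ 2)) x"
      using sq_plus_nz[OF c, of x] by (auto intro!: continuous_intros)
  next
    have "einterval (ereal 0) \<infinity> = {0::real<..}" by (auto simp: einterval_def)
    thus "set_integrable lborel (einterval (ereal 0) \<infinity>) (\<lambda>u. 1 / (complex_of_real u ^ 2 + c ^ 2))"
      using E_integrable[OF c] by simp
    show "(((\<lambda>x. G (of_real x)) \<circ> real_of_ereal) \<longlongrightarrow> G 0) (at_right (ereal 0))"
      unfolding ereal_tendsto_simps
    proof -
      have "isCont (\<lambda>x::real. G (of_real x)) 0"
        using contG[of 0] by (intro isCont_o2[where f="of_real" and g=G]) (auto intro!: continuous_intros)
      hence "((\<lambda>x::real. G (of_real x)) \<longlongrightarrow> G 0) (at 0)" by (simp add: isCont_def)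
      thus "((\<lambda>x::real. G (of_real x)) \<longlongrightarrow> G 0) (at_right 0)" by (rule filterlim_mono) (auto simp: at_le)
    qed
    show "(((\<lambda>x. G (of_real x)) \<circ> real_of_ereal) \<longlongrightarrow> 0) (at_left \<infinity>)"
      unfolding ereal_tendsto_simps using lim .
  qed
  thus ?thesis using G0 by (simp add: interval_integral_to_infinity_eq)
qed

lemma v1: fixes x u :: real assumes x: "x > 0"
  shows "((\<lambda>u. arctan (u / x) / (2 * x) - u / (2 * (u^2 + x^2))) has_real_derivative
        u^2 / ((u^2 + x^2) * (u^2 + x^2))) (at u)"
proof -
  have p: "u^2 + x^2 > 0" using x by (simp add: add_nonneg_pos)
  have d1: "((\<lambda>u. arctan (u / x)) has_real_derivative x / (u^2 + x^2)) (at u)"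
  proof -
    have "((\<lambda>u. arctan (u / x)) has_real_derivative inverse (1 + (u/x)^2) * (1 / x)) (at u)"
      by (rule DERIV_chain2[where f=arctan and g="\<lambda>u. u / x", OF DERIV_arctan]) (use x in \<open>auto intro!: derivative_eq_intros\<close>)
    moreover have "inverse (1 + (u/x)^2) * (1 / x) = x / (u^2 + x^2)"
      using x p by (simp add: field_simps power2_eq_square)
    ultimately show ?thesis by simp
  qed
  have d2: "((\<lambda>u. u / (2 * (u^2 + x^2))) has_real_derivative (x^2 - u^2) / (2 * (u^2 + x^2)^2)) (at u)"
  proof -
    have "((\<lambda>u. u / (2 * (u^2 + x^2))) has_real_derivative (1 * (2 * (u^2 + x^2)) - u * (2 * (2 * u))) / ((2 * (u^2 + x^2)) * (2 * (u^2 + x^2)))) (at u)"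
      by (rule DERIV_divide[where f="\<lambda>u. u" and g="\<lambda>u. 2 * (u^2 + x^2)"]) (use p in \<open>auto intro!: derivative_eq_intros\<close>)
    moreover have "(1 * (2 * (u^2 + x^2)) - u * (2 * (2 * u))) / ((2 * (u^2 + x^2)) * (2 * (u^2 + x^2))) = (x^2 - u^2) / (2 * (u^2 + x^2)^2)"
    proof -
      define S where "S = u^2 + x^2"
      have S: "S \<noteq> 0" unfolding S_def using p by linarith
      have "1 * (2 * (u^2 + x^2)) - u * (2 * (2 * u)) = 2 * (x^2 - u^2)" by (simp add: algebra_simps power2_eq_square)
      hence "(1 * (2 * (u^2 + x^2)) - u * (2 * (2 * u))) / ((2 * (u^2 + x^2)) * (2 * (u^2 + x^2))) = (2 * (x^2 - u^2)) / ((2 * S) * (2 * S))"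
        unfolding S_def by simp
      also have "\<dots> = (x^2 - u^2) / (2 * S^2)" using S by (simp add: power2_eq_square field_simps)
      finally show ?thesis unfolding S_def .
    qed
    ultimately show ?thesis by simp
  qed
  have "((\<lambda>u. arctan (u / x) / (2 * x) - u / (2 * (u^2 + x^2))) has_real_derivative
        x / (u^2 + x^2) / (2 * x) - (x^2 - u^2) / (2 * (u^2 + x^2)^2)) (at u)"
    by (intro DERIV_diff DERIV_cdivide d1 d2)
  moreover have "x / (u^2 + x^2) / (2 * x) - (x^2 - u^2) / (2 * (u^2 + x^2)^2) = u^2 / ((u^2 + x^2) * (u^2 + x^2))"
  proof -
    define S where "S = u^2 + x^2"
    have S: "S \<noteq> 0" unfolding S_def using p by linarith
    have e1: "x / S / (2 * x) = 1 / (2 * S)" using x by simp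
    have e2: "1 / (2 * S) - (x^2 - u^2) / (2 * S^2) = (S - (x^2 - u^2)) / (2 * S^2)"
      using S by (simp add: field_simps power2_eq_square)
    have e3: "S - (x^2 - u^2) = 2 * u^2" unfolding S_def by simp
    have "x / S / (2 * x) - (x^2 - u^2) / (2 * S^2) = u^2 / (S * S)"
      unfolding e1 e2 e3 using S by (simp add: power2_eq_square)
    thus ?thesis unfolding S_def .
  qed
  ultimately show ?thesis by simp
qed

lemma nz_re: fixes u x :: real shows "u > 0 \<Longrightarrow> (of_real u ^ 2 + of_real x ^ 2 :: complex) \<noteq> 0"
proof -
  assume u: "u > 0"
  have "(of_real u ^ 2 + of_real x ^ 2 :: complex) = of_real (u^2 + x^2)" by simp
  moreover have "u^2 + x^2 > 0" using u by (simp add: add_pos_nonneg)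
  ultimately show ?thesis by (metis of_real_eq_0_iff less_irrefl)
qed

lemma P_integrable:
  fixes c :: complex and x :: real
  assumes c: "Re c > 0"
  shows "set_integrable lborel {0<..}
     (\<lambda>u::real. of_real u ^ 2 / ((of_real u ^ 2 + of_real x ^ 2) * (of_real u ^ 2 + c ^ 2)))"
proof (rule set_integrable_bound[OF E_integrable[OF c]])
  show "set_borel_measurable lborel {0<..}
     (\<lambda>u::real. of_real u ^ 2 / ((of_real u ^ 2 + of_real x ^ 2) * (of_real u ^ 2 + c ^ 2)))"
    unfolding set_borel_measurable_def measurable_lborel2
    by (intro borel_measurable_continuous_on_indicator continuous_intros)
       (auto simp: sq_plus_nz[OF c] nz_re)
  have "norm (of_real u ^ 2 / ((of_real u ^ 2 + of_real x ^ 2) * (of_real u ^ 2 + c ^ 2)))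
      \<le> norm (1 / (of_real u ^ 2 + c ^ 2))" if u: "u > 0" for u :: real
  proof -
    have "norm ((of_real u ^ 2 :: complex) / (of_real u ^ 2 + of_real x ^ 2)) \<le> 1"
    proof -
      have "(of_real u ^ 2 :: complex) / (of_real u ^ 2 + of_real x ^ 2) = of_real (u^2 / (u^2 + x^2))" by simp
      moreover have pos: "u^2 + x^2 > 0" using u by (simp add: add_pos_nonneg)
      moreover have "u^2 / (u^2 + x^2) \<le> 1" "0 \<le> u^2 / (u^2 + x^2)" using pos by (auto simp: divide_le_eq_1)
      ultimately show ?thesis by (simp only: norm_of_real)
    qed
    hence "norm ((of_real u ^ 2 :: complex) / (of_real u ^ 2 + of_real x ^ 2)) * norm (1 / (of_real u ^ 2 + c ^ 2))
        \<le> 1 * norm (1 / (of_real u ^ 2 + c ^ 2))" by (intro mult_right_mono) auto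
    thus ?thesis by (simp add: norm_mult norm_divide)
  qed
  thus "AE u\<in>{0<..} in lborel. norm (of_real u ^ 2 / ((of_real u ^ 2 + of_real x ^ 2) * (of_real u ^ 2 + c ^ 2)))
      \<le> norm (1 / (of_real u ^ 2 + c ^ 2))" by (auto intro!: AE_I2)
qed

lemma P_value_eq:
  fixes x :: real assumes x: "x > 0"
  shows "(LBINT u:{0<..}. (u^2 / ((u^2 + x^2) * (u^2 + x^2)) :: real)) = pi / (4 * x)"
proof -
  have "(LBINT u=ereal 0..\<infinity>. (u^2 / ((u^2 + x^2) * (u^2 + x^2)) :: real)) = pi / (4 * x) - 0"
  proof (rule interval_integral_FTC_nonneg(2)[where F="\<lambda>u. arctan (u / x) / (2 * x) - u / (2 * (u^2 + x^2))"])
    show "ereal 0 < \<infinity>" by simp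
    fix u assume "ereal 0 < ereal u" "ereal u < \<infinity>"
    have p: "u^2 + x^2 > 0" using x by (simp add: add_nonneg_pos)
    show "((\<lambda>u. arctan (u / x) / (2 * x) - u / (2 * (u^2 + x^2))) has_real_derivative
        u^2 / ((u^2 + x^2) * (u^2 + x^2))) (at u)"
      using v1[OF x] .
    show "isCont (\<lambda>u. u^2 / ((u^2 + x^2) * (u^2 + x^2))) u" using p by (auto intro!: continuous_intros)
  next
    show "AE u in lborel. ereal 0 < ereal u \<longrightarrow> ereal u < \<infinity> \<longrightarrow> 0 \<le> u^2 / ((u^2 + x^2) * (u^2 + x^2))"
      by auto
    show "(((\<lambda>u. arctan (u / x) / (2 * x) - u / (2 * (u^2 + x^2))) \<circ> real_of_ereal) \<longlongrightarrow> 0) (at_right (ereal 0))"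
      unfolding ereal_tendsto_simps using x by (auto intro!: tendsto_eq_intros)
    show "(((\<lambda>u. arctan (u / x) / (2 * x) - u / (2 * (u^2 + x^2))) \<circ> real_of_ereal) \<longlongrightarrow> pi / (4 * x)) (at_left \<infinity>)"
      unfolding ereal_tendsto_simps
    proof -
      have "((\<lambda>u. arctan (u / x) / (2 * x) - u / (2 * (u^2 + x^2))) \<longlongrightarrow> pi * inverse x / 4) at_top"
        using x by real_asymp
      moreover have "pi * inverse x / 4 = pi / (4 * x)" by (simp add: field_simps)
      ultimately show "((\<lambda>u. arctan (u / x) / (2 * x) - u / (2 * (u^2 + x^2))) \<longlongrightarrow> pi / (4 * x)) at_top" by simp
    qed
  qed
  thus ?thesis by (simp add: interval_integral_to_infinity_eq)
qed

lemma pf: fixes A X C :: complex assumes "A + X \<noteq> 0" "A + C \<noteq> 0" "C - X \<noteq> 0"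
  shows "A / ((A + X) * (A + C)) = C / (C - X) * (1 / (A + C)) - X / (C - X) * (1 / (A + X))"
proof -
  have "C / (C - X) * (1 / (A + C)) - X / (C - X) * (1 / (A + X))
      = (C * (A + X) - X * (A + C)) / ((C - X) * ((A + C) * (A + X)))"
    using assms by (simp add: frac_eq_eq diff_frac_eq) (simp add: algebra_simps)
  also have "C * (A + X) - X * (A + C) = A * (C - X)" by (simp add: algebra_simps)
  also have "A * (C - X) / ((C - X) * ((A + C) * (A + X))) = A / ((A + X) * (A + C))"
    using assms by (simp add: mult.commute)
  finally show ?thesis ..
qed

lemma fin: fixes c x p :: complex assumes "c - x \<noteq> 0" "x \<noteq> 0" "c \<noteq> 0" "c + x \<noteq> 0"
  shows "c^2/(c^2-x^2) * (p/(2*c)) - x^2/(c^2-x^2)*(p/(2*x)) = p/(2*(x+c))"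
proof -
  define D where "D = c^2 - x^2"
  have e: "D = (c - x) * (c + x)" unfolding D_def by (simp add: algebra_simps power2_eq_square)
  have 1: "c^2/D * (p/(2*c)) = c*p/(2*D)" using assms by (simp add: power2_eq_square)
  have 2: "x^2/D * (p/(2*x)) = x*p/(2*D)" using assms by (simp add: power2_eq_square)
  have "c^2/D * (p/(2*c)) - x^2/D*(p/(2*x)) = (c*p - x*p)/(2*D)" unfolding 1 2 by (simp add: diff_divide_distrib)
  also have "c*p - x*p = (c - x) * p" by (simp add: algebra_simps)
  also have "(c - x) * p / (2 * D) = p/(2*(x+c))" unfolding e using assms by (simp add: add.commute)
  finally show ?thesis unfolding D_def .
qed

lemma P_value:
  fixes c :: complex and x :: real
  assumes c: "Re c > 0" and x: "x > 0"
  shows "(LBINT u:{0<..}. of_real u ^ 2 / ((of_real u ^ 2 + of_real x ^ 2) * (of_real u ^ 2 + c ^ 2)))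
     = of_real pi / (2 * (of_real x + c))"
proof (cases "c = of_real x")
  case True
  have "(LBINT u:{0<..}. of_real u ^ 2 / ((of_real u ^ 2 + of_real x ^ 2) * (of_real u ^ 2 + c ^ 2)))
     = (LBINT u:{0<..}. complex_of_real (u^2 / ((u^2 + x^2) * (u^2 + x^2))))"
    unfolding True by simp
  also have "\<dots> = of_real (pi / (4 * x))" by (simp only: set_integral_complex_of_real P_value_eq[OF x])
  also have "\<dots> = of_real pi / (2 * (of_real x + c))" using x unfolding True by (simp add: field_simps)
  finally show ?thesis .
next
  case False
  have xc: "Re (of_real x :: complex) > 0" using x by simp
  have ne: "c ^ 2 - (of_real x) ^ 2 \<noteq> 0"
  proof
    assume "c ^ 2 - (of_real x) ^ 2 = 0"
    hence "(c - of_real x) * (c + of_real x) = 0" by (simp add: algebra_simps power2_eq_square)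
    hence "c - of_real x = 0 \<or> c + of_real x = 0" by simp
    hence "c = of_real x \<or> c = - of_real x" by (auto simp: add_eq_0_iff)
    thus False using False c x by auto
  qed
  have cx: "c + of_real x \<noteq> 0" using c x by (auto simp: complex_eq_iff)
  define k1 where "k1 = c^2 / (c ^ 2 - (of_real x) ^ 2)"
  define k2 where "k2 = (of_real x)^2 / (c ^ 2 - (of_real x) ^ 2)"
  have eq: "of_real u ^ 2 / ((of_real u ^ 2 + of_real x ^ 2) * (of_real u ^ 2 + c ^ 2))
      = k1 * (1 / (of_real u ^ 2 + c ^ 2)) - k2 * (1 / (of_real u ^ 2 + (of_real x) ^ 2))" for u :: real
    using pf[OF sq_plus_nz[OF xc, of u] sq_plus_nz[OF c, of u] ne] unfolding k1_def k2_def by simp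
  have "(LBINT u:{0<..}. of_real u ^ 2 / ((of_real u ^ 2 + of_real x ^ 2) * (of_real u ^ 2 + c ^ 2)))
      = (LBINT u:{0<..}. k1 * (1 / (of_real u ^ 2 + c ^ 2)) - k2 * (1 / (of_real u ^ 2 + (of_real x) ^ 2)))"
    unfolding eq ..
  also have "\<dots> = k1 * (of_real pi / (2 * c)) - k2 * (of_real pi / (2 * of_real x))"
  proof -
    have i1: "set_integrable lborel {0<..} (\<lambda>u::real. k1 * (1 / (of_real u ^ 2 + c ^ 2)))"
      by (rule set_integrable_mult_right) (rule E_integrable[OF c])
    have i2: "set_integrable lborel {0<..} (\<lambda>u::real. k2 * (1 / (of_real u ^ 2 + (of_real x) ^ 2)))"
      by (rule set_integrable_mult_right) (rule E_integrable[OF xc])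
    show ?thesis
      unfolding set_integral_diff(2)[OF i1 i2] set_integral_mult_right E_value[OF c] E_value[OF xc] ..
  qed
  also have "\<dots> = of_real pi / (2 * (of_real x + c))"
  proof -
    have "c - of_real x \<noteq> 0" "of_real x \<noteq> (0::complex)" "c \<noteq> 0" using False x c by auto
    thus ?thesis unfolding k1_def k2_def using fin cx by simp
  qed
  finally show ?thesis .
qed

definition kern :: "complex \<Rightarrow> real \<Rightarrow> complex" where
  "kern b u = (2 / of_real pi) * (of_real u * (1 / (of_real u ^ 2 + (1/2) ^ 2)) - of_real u * (1 / (of_real u ^ 2 + b ^ 2)))"

lemma half_re: "Re (1/2 :: complex) > 0" by simp

lemma quarter_nz: "(of_real u ^ 2 + (1/2) ^ 2 :: complex) \<noteq> 0"
  using sq_plus_nz[OF half_re, of u] .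

lemma kern_alt:
  assumes b: "Re b > 0"
  shows "kern b u = (2 / of_real pi) * ((b^2 - 1/4) * of_real u) / ((of_real u ^ 2 + b ^ 2) * of_real (u^2 + 1/4))"
proof -
  have n1: "(of_real u ^ 2 + (1/2) ^ 2 :: complex) \<noteq> 0" by (rule quarter_nz)
  have n2: "of_real u ^ 2 + b ^ 2 \<noteq> 0" by (rule sq_plus_nz[OF b])
  have e: "(of_real (u^2 + 1/4) :: complex) = of_real u ^ 2 + (1/2) ^ 2" by (simp add: power2_eq_square)
  have "1 / (of_real u ^ 2 + (1/2) ^ 2) - 1 / (of_real u ^ 2 + b ^ 2)
      = ((of_real u ^ 2 + b ^ 2) - (of_real u ^ 2 + (1/2) ^ 2)) / ((of_real u ^ 2 + (1/2) ^ 2) * (of_real u ^ 2 + b ^ 2))"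
    using n1 n2 by (simp add: diff_frac_eq)
  also have "(of_real u ^ 2 + b ^ 2) - (of_real u ^ 2 + (1/2) ^ 2) = b^2 - (1/4 :: complex)"
    by (simp add: power2_eq_square)
  finally have "1 / (of_real u ^ 2 + (1/2) ^ 2) - 1 / (of_real u ^ 2 + b ^ 2)
      = (b^2 - 1/4) / ((of_real u ^ 2 + b ^ 2) * of_real (u^2 + 1/4))"
    unfolding e by (simp add: mult.commute)
  note dd = this
  have "kern b u = (2 / of_real pi) * (of_real u * (1 / (of_real u ^ 2 + (1/2) ^ 2) - 1 / (of_real u ^ 2 + b ^ 2)))"
    unfolding kern_def by (simp only: right_diff_distrib)
  also have "\<dots> = (2 / of_real pi) * (of_real u * ((b^2 - 1/4) / ((of_real u ^ 2 + b ^ 2) * of_real (u^2 + 1/4))))"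
    unfolding dd ..
  also have "\<dots> = (2 / of_real pi) * ((b^2 - 1/4) * of_real u) / ((of_real u ^ 2 + b ^ 2) * of_real (u^2 + 1/4))"
    by (simp only: times_divide_eq_right mult.commute)
  finally show ?thesis .
qed

lemma cmod_quarter: "cmod ((complex_of_real u)\<^sup>2 + 1 / 4) = u^2 + 1/4"
proof -
  have "(complex_of_real u)\<^sup>2 + 1 / 4 = of_real (u^2 + 1/4)" by simp
  also have "cmod \<dots> = u^2 + 1/4" by (simp only: norm_of_real) (simp add: add_nonneg_pos)
  finally show ?thesis .
qed

lemma kern_cont: "Re b > 0 \<Longrightarrow> continuous_on S (kern b)"
  unfolding kern_def[abs_def]
  by (intro continuous_intros) (auto simp: sq_plus_nz quarter_nz)

lemma kern_meas[measurable]: "Re b > 0 \<Longrightarrow> kern b \<in> borel_measurable borel"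
  by (rule borel_measurable_continuous_onI) (rule kern_cont)

lemma kern_bound:
  assumes b: "Re b > 0" and u: "1 \<le> u"
  shows "norm (kern b u) \<le> ((2/pi) * cmod (b^2 - 1/4) * (cmod b / Re b)) / u^3"
proof -
  define A where "A = (2/pi) * cmod (b^2 - 1/4)"
  define R where "R = cmod b / Re b"
  define N where "N = cmod (1 / (of_real u ^ 2 + b ^ 2))"
  have A0: "A \<ge> 0" unfolding A_def by simp
  have R0: "R \<ge> 0" unfolding R_def using b by simp
  have u0: "u > 0" using u by simp
  have nk: "norm (kern b u) = A * u * N / (u^2 + 1/4)"
  proof -
    have "norm (kern b u) = (2/pi) * (cmod (b^2 - 1/4) * \<bar>u\<bar>) / (cmod (of_real u ^ 2 + b ^ 2) * \<bar>u^2 + 1/4\<bar>)"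
      unfolding kern_alt[OF b] by (simp add: norm_mult norm_divide cmod_quarter)
    also have "\<dots> = A * u * N / (u^2 + 1/4)"
      unfolding A_def N_def using u0 by (simp add: norm_divide field_simps)
    finally show ?thesis .
  qed
  have N: "N \<le> R / u^2"
  proof -
    have "N \<le> R / (u^2 + (cmod b)^2)" unfolding N_def R_def by (rule sq_plus_inv_bound[OF b])
    also have "\<dots> \<le> R / u^2" using R0 u0 by (intro divide_left_mono) (auto simp: add_pos_nonneg)
    finally show ?thesis .
  qed
  have "A * u * N / (u^2 + 1/4) \<le> A * u * (R / u^2) / (u^2 + 1/4)"
    using A0 u0 N by (intro divide_right_mono mult_left_mono) auto
  also have "\<dots> \<le> A * u * (R / u^2) / u^2"
    using A0 u0 R0 by (intro divide_left_mono) (auto intro!: mult_nonneg_nonneg mult_pos_pos add_pos_pos)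
  also have "\<dots> = A * R / u^3" using u0 by (simp add: field_simps power2_eq_square power3_eq_cube)
  finally show ?thesis unfolding nk A_def R_def by simp
qed

definition Dk :: "complex \<Rightarrow> real \<Rightarrow> real" where
  "Dk b u = (1 + u + u * sqrt u) * norm (kern b u)"

lemma Dk_integrable:
  assumes b: "Re b > 0"
  shows "set_integrable lborel {0<..} (Dk b)"
proof (rule integrable_crit[where C="3 * ((2/pi) * cmod (b^2 - 1/4) * (cmod b / Re b))"])
  show "continuous_on {0..} (Dk b)"
    unfolding Dk_def[abs_def] by (intro continuous_intros continuous_on_norm kern_cont b) 
  fix u :: real assume u: "1 \<le> u"
  define K where "K = (2/pi) * cmod (b^2 - 1/4) * (cmod b / Re b)"
  have K0: "K \<ge> 0" unfolding K_def using b by simp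
  have u0: "u > 0" using u by simp
  have s1: "1 \<le> sqrt u" using u by simp
  have us: "u \<le> u * sqrt u" using s1 u0 by (metis mult_left_mono mult.right_neutral less_imp_le)
  have one: "1 \<le> u * sqrt u" using u us by linarith
  have "norm (Dk b u) = (1 + u + u * sqrt u) * norm (kern b u)"
    unfolding Dk_def using u0 by (simp add: abs_mult)
  also have "\<dots> \<le> (3 * (u * sqrt u)) * (K / u^3)"
    unfolding K_def using us one kern_bound[OF b u] by (intro mult_mono) auto
  also have "\<dots> = 3 * K / (u * sqrt u)"
  proof -
    have "u^3 = (u * sqrt u) * (u * sqrt u)" using u0 by (simp add: power3_eq_cube algebra_simps)
    thus ?thesis using u0 by (simp add: field_simps)
  qed
  finally show "norm (Dk b u) \<le> 3 * K / (u * sqrt u)" .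
qed simp

lemma dom_int:
  fixes g :: "real \<Rightarrow> 'a::{banach, second_countable_topology}"
  assumes b: "Re b > 0" and g: "g \<in> borel_measurable borel"
    and bnd: "\<And>u. u > 0 \<Longrightarrow> norm (g u) \<le> C * Dk b u"
  shows "set_integrable lborel {0<..} g"
proof (rule set_integrable_bound)
  show "set_integrable lborel {0<..} (\<lambda>u. C * Dk b u)"
    using Dk_integrable[OF b] by (rule set_integrable_mult_right)
  show "set_borel_measurable lborel {0<..} g"
    unfolding set_borel_measurable_def using g by measurable
  have "norm (g u) \<le> norm (C * Dk b u)" if "u > 0" for u
  proof -
    have "norm (g u) \<le> C * Dk b u" by (rule bnd[OF that])
    also have "\<dots> \<le> \<bar>C * Dk b u\<bar>" by simp
    finally show ?thesis by simp
  qed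
  thus "AE u\<in>{0<..} in lborel. norm (g u) \<le> norm (C * Dk b u)" by (auto intro!: AE_I2)
qed

lemma Dk_ge: "u \<ge> 0 \<Longrightarrow> norm (kern b u) \<le> Dk b u"
  unfolding Dk_def by (simp add: mult_le_cancel_right1)

lemma X1:
  fixes u a :: real assumes u: "u > 0" and a: "a > 0"
  shows "set_integrable lborel {a<..} (\<lambda>x. u / (u^2 + x^2))"
    and "(LBINT x:{a<..}. u / (u^2 + x^2)) = pi/2 - arctan (a/u)"
proof -
  have p: "u^2 + x^2 > 0" for x using u by (simp add: add_pos_nonneg)
  have F: "((\<lambda>x. arctan (x / u)) has_real_derivative u / (u^2 + x^2)) (at x)" for x
  proof -
    have "((\<lambda>x. arctan (x / u)) has_real_derivative inverse (1 + (x/u)^2) * (1 / u)) (at x)"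
      by (rule DERIV_chain2[where f=arctan and g="\<lambda>x. x / u", OF DERIV_arctan]) (use u in \<open>auto intro!: derivative_eq_intros\<close>)
    moreover have "inverse (1 + (x/u)^2) * (1 / u) = u / (u^2 + x^2)"
      using u p[of x] by (simp add: field_simps power2_eq_square)
    ultimately show ?thesis by simp
  qed
  have lim1: "(((\<lambda>x. arctan (x / u)) \<circ> real_of_ereal) \<longlongrightarrow> arctan (a/u)) (at_right (ereal a))"
    unfolding ereal_tendsto_simps using u by (auto intro!: tendsto_eq_intros)
  have lim2: "(((\<lambda>x. arctan (x / u)) \<circ> real_of_ereal) \<longlongrightarrow> pi/2) (at_left \<infinity>)"
    unfolding ereal_tendsto_simps using u by real_asymp
  have ei: "einterval (ereal a) \<infinity> = {a<..}" by (auto simp: einterval_def)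
  have "set_integrable lborel (einterval (ereal a) \<infinity>) (\<lambda>x. u / (u^2 + x^2))"
     "(LBINT x=ereal a..\<infinity>. u / (u^2 + x^2)) = pi/2 - arctan (a/u)"
    by (rule interval_integral_FTC_nonneg[OF _ F _ _ lim1 lim2];
        use u p in \<open>auto intro!: continuous_intros\<close>)+
  thus "set_integrable lborel {a<..} (\<lambda>x. u / (u^2 + x^2))"
    and "(LBINT x:{a<..}. u / (u^2 + x^2)) = pi/2 - arctan (a/u)"
    unfolding ei by (simp_all add: interval_integral_to_infinity_eq)
qed

lemma frac_re_pos:
  fixes b :: complex assumes b: "Re b > 0" and x: "x \<ge> 0"
  shows "(of_real x + b) / (of_real x + 1/2) \<notin> \<real>\<^sub>\<le>\<^sub>0"
proof -
  have "(of_real x + b) / (of_real x + 1/2) = (of_real x + b) / of_real (x + 1/2)" by simp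
  hence "Re ((of_real x + b) / (of_real x + 1/2)) = (x + Re b) / (x + 1/2)"
    by (simp only: Re_divide_of_real) simp
  moreover have "(x + Re b) / (x + 1/2) > 0" using b x by simp
  ultimately show ?thesis by (simp add: complex_nonpos_Reals_iff)
qed

lemma dfrac: fixes p q :: complex assumes "p \<noteq> 0" "q \<noteq> 0"
  shows "- (inverse (q / p) * ((1 * p - q * 1) / (p * p))) = 1 / p - 1 / q"
  using assms by (simp add: field_simps)

lemma X2:
  fixes b :: complex and a :: real
  assumes b: "Re b > 0" and a: "a > 0"
  shows "set_integrable lborel {a<..} (\<lambda>x::real. 1 / (of_real x + 1/2) - 1 / (of_real x + b))"
    and "(LBINT x:{a<..}. 1 / (of_real x + 1/2) - 1 / (of_real x + b)) = Ln ((of_real a + b) / (of_real a + 1/2))"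
proof -
  have nzh: "of_real x + 1/2 \<noteq> (0::complex)" if "x \<ge> 0" for x :: real
    using that by (auto simp: complex_eq_iff)
  have nzb: "of_real x + b \<noteq> 0" if "x \<ge> 0" for x :: real
    using that b by (auto simp: complex_eq_iff)
  show int: "set_integrable lborel {a<..} (\<lambda>x::real. 1 / (of_real x + 1/2) - 1 / (of_real x + b))"
  proof (rule integrable_crit[where C="cmod (b - 1/2)"])
    show "0 \<le> a" using a by simp
    show "continuous_on {a..} (\<lambda>x::real. 1 / (of_real x + 1/2) - 1 / (of_real x + b))"
      using a nzh nzb by (intro continuous_intros) auto
    fix x :: real assume x: "1 \<le> x"
    have e: "1 / (of_real x + 1/2) - 1 / (of_real x + b) = (b - 1/2) / ((of_real x + 1/2) * (of_real x + b))"
      using nzh[of x] nzb[of x] x by (simp add: diff_frac_eq)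
    have n1: "cmod (of_real x + 1/2) \<ge> x"
    proof -
      have "x \<le> Re (of_real x + 1/2 :: complex)" by simp
      also have "\<dots> \<le> cmod (of_real x + 1/2)" by (rule complex_Re_le_cmod)
      finally show ?thesis .
    qed
    have n2: "cmod (of_real x + b) \<ge> x"
    proof -
      have "x \<le> Re (of_real x + b)" using b by simp
      also have "\<dots> \<le> cmod (of_real x + b)" by (rule complex_Re_le_cmod)
      finally show ?thesis .
    qed
    have "cmod (1 / (of_real x + 1/2) - 1 / (of_real x + b)) = cmod (b - 1/2) / (cmod (of_real x + 1/2) * cmod (of_real x + b))"
      unfolding e by (simp add: norm_divide norm_mult)
    also have "\<dots> \<le> cmod (b - 1/2) / (x * x)"
      using x n1 n2 by (intro divide_left_mono mult_mono mult_pos_pos) auto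
    also have "\<dots> \<le> cmod (b - 1/2) / (x * sqrt x)"
      using x sqrt_le_self'[OF x] by (intro divide_left_mono mult_left_mono mult_pos_pos) auto
    finally show "cmod (1 / (of_real x + 1/2) - 1 / (of_real x + b)) \<le> cmod (b - 1/2) / (x * sqrt x)" .
  qed
  define F where "F x = - Ln ((of_real x + b) / (of_real x + 1/2))" for x :: real
  have dF: "(F has_vector_derivative (1 / (of_real x + 1/2) - 1 / (of_real x + b))) (at x)" if x: "x \<ge> 0" for x :: real
  proof -
    define G where "G z = - Ln ((z + b) / (z + 1/2))" for z :: complex
    have g: "((\<lambda>z. (z + b) / (z + 1/2)) has_field_derivative ((1 * (of_real x + 1/2) - (of_real x + b) * 1) / ((of_real x + 1/2) * (of_real x + 1/2)))) (at (of_real x))"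
      by (rule DERIV_divide[where f="\<lambda>z. z + b" and g="\<lambda>z. z + 1/2"]) (use nzh[OF x] in \<open>auto intro!: derivative_eq_intros\<close>)
    have "(G has_field_derivative - (inverse ((of_real x + b) / (of_real x + 1/2)) * ((1 * (of_real x + 1/2) - (of_real x + b) * 1) / ((of_real x + 1/2) * (of_real x + 1/2))))) (at (of_real x))"
      unfolding G_def
      by (intro DERIV_minus DERIV_chain2[where f=Ln and g="\<lambda>z. (z + b) / (z + 1/2)", OF has_field_derivative_Ln g] frac_re_pos b x)
    also have "- (inverse ((of_real x + b) / (of_real x + 1/2)) * ((1 * (of_real x + 1/2) - (of_real x + b) * 1) / ((of_real x + 1/2) * (of_real x + 1/2))))
       = 1 / (of_real x + 1/2) - 1 / (of_real x + b)"
      by (rule dfrac[OF nzh[OF x] nzb[OF x]])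
    finally have "(G has_field_derivative 1 / (of_real x + 1/2) - 1 / (of_real x + b)) (at (of_real x))" .
    from has_vector_derivative_real_field[OF this] show ?thesis unfolding F_def G_def by simp
  qed
  have contF: "isCont F x" if "x \<ge> 0" for x
    using dF[OF that] by (rule has_vector_derivative_continuous)
  have lim2: "(F \<longlongrightarrow> 0) at_top"
  proof -
    have ev: "eventually (\<lambda>x. (of_real x + b) / (of_real x + 1/2) = 1 + (b - 1/2) * of_real (1 / (x + 1/2))) at_top"
      using eventually_ge_at_top[of 0]
    proof eventually_elim
      case (elim x)
      have nz: "of_real x + 1/2 \<noteq> (0::complex)" using nzh[OF elim] .
      have gen: "\<And>P d::complex. P \<noteq> 0 \<Longrightarrow> (P + d) / P = 1 + d / P" by (simp add: add_divide_distrib)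
      have e: "of_real x + b = (of_real x + 1/2) + (b - 1/2 :: complex)" by simp
      have o: "complex_of_real (1 / (x + 1/2)) = 1 / (of_real x + 1/2)" by simp
      have "(of_real x + b) / (of_real x + 1/2) = ((of_real x + 1/2) + (b - 1/2)) / (of_real x + 1/2)"
        by (simp only: e[symmetric])
      also have "\<dots> = 1 + (b - 1/2) / (of_real x + 1/2)"
        by (rule gen[OF nz])
      also have "\<dots> = 1 + (b - 1/2) * of_real (1 / (x + 1/2))"
        by (simp only: o times_divide_eq_right mult_1_right)
      finally show ?case .
    qed
    have "((\<lambda>x. 1 + (b - 1/2) * of_real (1 / (x + 1/2))) \<longlongrightarrow> 1 + (b - 1/2) * of_real 0) at_top"
      by (intro tendsto_intros) real_asymp
    hence "((\<lambda>x. (of_real x + b) / (of_real x + 1/2)) \<longlongrightarrow> 1) at_top"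
      using tendsto_cong[OF ev] by simp
    hence "((\<lambda>x. - Ln ((of_real x + b) / (of_real x + 1/2))) \<longlongrightarrow> - Ln 1) at_top"
      by (intro tendsto_intros tendsto_Ln) auto
    thus ?thesis unfolding F_def[abs_def] by simp
  qed
  have "(LBINT x=ereal a..\<infinity>. 1 / (of_real x + 1/2) - 1 / (of_real x + b)) = 0 - F a"
  proof (rule interval_integral_FTC_integrable[where F=F])
    show "ereal a < \<infinity>" by simp
    fix x assume "ereal a < ereal x" "ereal x < \<infinity>"
    hence x: "x \<ge> 0" using a by simp
    show "(F has_vector_derivative 1 / (of_real x + 1/2) - 1 / (of_real x + b)) (at x)" by (rule dF[OF x])
    show "isCont (\<lambda>x. 1 / (complex_of_real x + 1 / 2) - 1 / (complex_of_real x + b)) x"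
      using nzh[OF x] nzb[OF x] by (auto intro!: continuous_intros)
  next
    have "einterval (ereal a) \<infinity> = {a<..}" by (auto simp: einterval_def)
    thus "set_integrable lborel (einterval (ereal a) \<infinity>) (\<lambda>x. 1 / (complex_of_real x + 1 / 2) - 1 / (complex_of_real x + b))"
      using int by simp
    show "((F \<circ> real_of_ereal) \<longlongrightarrow> F a) (at_right (ereal a))"
      unfolding ereal_tendsto_simps
      using contF[of a] a by (simp add: isCont_def) (rule filterlim_mono, assumption, auto simp: at_le)
    show "((F \<circ> real_of_ereal) \<longlongrightarrow> 0) (at_left \<infinity>)"
      unfolding ereal_tendsto_simps using lim2 .
  qed
  thus "(LBINT x:{a<..}. 1 / (of_real x + 1/2) - 1 / (of_real x + b)) = Ln ((of_real a + b) / (of_real a + 1/2))"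
    by (simp add: interval_integral_to_infinity_eq F_def)
qed

lemma g1: fixes U X C B p :: complex
  shows "U/(U^2+X) * ((2/p) * (U * (1/(U^2+C)) - U*(1/(U^2+B)))) = (2/p) * (U^2/((U^2+X)*(U^2+C)) - U^2/((U^2+X)*(U^2+B)))"
  by (simp add: right_diff_distrib power2_eq_square mult_ac)

lemma g3: fixes p A B :: complex assumes "p \<noteq> 0" "A \<noteq> 0" "B \<noteq> 0"
  shows "(2/p) * (p/(2*A) - p/(2*B)) = 1/A - 1/B"
  using assms by (simp add: field_simps)

lemma Q_value:
  fixes b :: complex and x :: real
  assumes b: "Re b > 0" and x: "x > 0"
  shows "set_integrable lborel {0<..} (\<lambda>u. of_real (u / (u^2 + x^2)) * kern b u)"
    and "(LBINT u:{0<..}. of_real (u / (u^2 + x^2)) * kern b u) = 1 / (of_real x + 1/2) - 1 / (of_real x + b)"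
proof -
  define P where "P c u = of_real u ^ 2 / ((of_real u ^ 2 + of_real x ^ 2) * (of_real u ^ 2 + c ^ 2))" for c :: complex and u :: real
  have pt: "of_real (u / (u^2 + x^2)) * kern b u = (2 / of_real pi) * (P (1/2) u - P b u)" for u :: real
  proof -
    have o: "(of_real (u / (u^2 + x^2)) :: complex) = of_real u / (of_real u ^ 2 + of_real x ^ 2)" by simp
    show ?thesis unfolding kern_def P_def o
      by (rule g1[where U="of_real u" and X="of_real x ^ 2" and C="(1/2)^2" and B="b^2" and p="of_real pi"])
  qed
  have i1: "set_integrable lborel {0<..} (P (1/2))" unfolding P_def[abs_def] by (rule P_integrable[OF half_re])
  have i2: "set_integrable lborel {0<..} (P b)" unfolding P_def[abs_def] by (rule P_integrable[OF b])
  have i: "set_integrable lborel {0<..} (\<lambda>u. (2 / of_real pi) * (P (1/2) u - P b u))"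
    by (rule set_integrable_mult_right) (rule set_integral_diff(1)[OF i1 i2])
  show "set_integrable lborel {0<..} (\<lambda>u. of_real (u / (u^2 + x^2)) * kern b u)"
    using i unfolding pt .
  have "(LBINT u:{0<..}. of_real (u / (u^2 + x^2)) * kern b u) = (LBINT u:{0<..}. (2 / of_real pi) * (P (1/2) u - P b u))"
    unfolding pt ..
  also have "\<dots> = (2 / of_real pi) * (of_real pi / (2 * (of_real x + 1/2)) - of_real pi / (2 * (of_real x + b)))"
    unfolding set_integral_mult_right set_integral_diff(2)[OF i1 i2]
    unfolding P_def P_value[OF half_re x] P_value[OF b x] ..
  also have "\<dots> = 1 / (of_real x + 1/2) - 1 / (of_real x + b)"
    by (rule g3) (use x b in \<open>auto simp: complex_eq_iff\<close>)
  finally show "(LBINT u:{0<..}. of_real (u / (u^2 + x^2)) * kern b u) = 1 / (of_real x + 1/2) - 1 / (of_real x + b)" .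
qed

lemma J_int:
  assumes b: "Re b > 0" and a: "a > 0"
  shows "set_integrable lborel {0<..} (\<lambda>u. of_real (arctan (u/a)) * kern b u)"
proof (rule dom_int[OF b, where C="pi/2"])
  show "(\<lambda>u. of_real (arctan (u/a)) * kern b u) \<in> borel_measurable borel"
    using a by (intro borel_measurable_continuous_onI continuous_intros kern_cont b) auto
  fix u :: real assume u: "u > 0"
  have "norm (of_real (arctan (u/a)) * kern b u) = \<bar>arctan (u/a)\<bar> * norm (kern b u)"
    by (simp add: norm_mult)
  also have "\<dots> \<le> (pi/2) * Dk b u"
    using arctan_bounded[of "u/a"] Dk_ge[of u b] u by (intro mult_mono) auto
  finally show "norm (of_real (arctan (u/a)) * kern b u) \<le> pi/2 * Dk b u" .
qed

lemma J_value:
  assumes b: "Re b > 0" and a: "a > 0"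
  shows "(LBINT u:{0<..}. of_real (arctan (u/a)) * kern b u) = Ln ((of_real a + b) / (of_real a + 1/2))"
proof -
  note km[measurable] = kern_meas[OF b]
  define f where "f u x = (indicator {0<..} u * indicator {a<..} x * (u / (u^2 + x^2))) *\<^sub>R kern b u" for u x :: real
  have fmeas: "(\<lambda>(u,x). f u x) \<in> borel_measurable (lborel \<Otimes>\<^sub>M lborel)"
    unfolding f_def by measurable
  have inner1: "(\<integral>x. f u x \<partial>lborel) = indicator {0<..} u *\<^sub>R (of_real (arctan (u/a)) * kern b u)" for u
  proof (cases "u > 0")
    case True
    have "(\<integral>x. f u x \<partial>lborel) = (\<integral>x. (indicator {a<..} x * (u / (u^2 + x^2))) *\<^sub>R kern b u \<partial>lborel)"
      unfolding f_def using True by simp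
    also have "\<dots> = (\<integral>x. indicator {a<..} x * (u / (u^2 + x^2)) \<partial>lborel) *\<^sub>R kern b u"
      using X1(1)[OF True a] by (intro integral_scaleR_left) (simp add: set_integrable_def)
    also have "(\<integral>x. indicator {a<..} x * (u / (u^2 + x^2)) \<partial>lborel) = pi/2 - arctan (a/u)"
      using X1(2)[OF True a] by (simp add: set_lebesgue_integral_def)
    also have "pi/2 - arctan (a/u) = arctan (u/a)"
      using arctan_inverse[of "a/u"] True a by simp
    finally show ?thesis using True by (simp add: scaleR_conv_of_real)
  next
    case False thus ?thesis unfolding f_def by simp
  qed
  have inner2: "(\<integral>u. f u x \<partial>lborel) = indicator {a<..} x *\<^sub>R (1 / (of_real x + 1/2) - 1 / (of_real x + b))" for x
  proof (cases "x > a")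
    case True
    hence x: "x > 0" using a by simp
    have "(\<integral>u. f u x \<partial>lborel) = (\<integral>u. indicator {0<..} u *\<^sub>R (of_real (u / (u^2 + x^2)) * kern b u) \<partial>lborel)"
      unfolding f_def using True by (intro Bochner_Integration.integral_cong) (auto simp: scaleR_conv_of_real split: split_indicator)
    also have "\<dots> = 1 / (of_real x + 1/2) - 1 / (of_real x + b)"
      using Q_value(2)[OF b x] by (simp add: set_lebesgue_integral_def)
    finally show ?thesis using True by simp
  next
    case False thus ?thesis unfolding f_def by simp
  qed
  have norm_inner: "(\<integral>x. norm (f u x) \<partial>lborel) = indicator {0<..} u * ((pi/2 - arctan (a/u)) * norm (kern b u))" for u
  proof (cases "u > 0")
    case True
    have "(\<integral>x. norm (f u x) \<partial>lborel) = (\<integral>x. indicator {a<..} x * (u / (u^2 + x^2)) * norm (kern b u) \<partial>lborel)"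
      unfolding f_def using True
      by (intro Bochner_Integration.integral_cong) (auto simp: norm_mult split: split_indicator)
    also have "\<dots> = (\<integral>x. indicator {a<..} x * (u / (u^2 + x^2)) \<partial>lborel) * norm (kern b u)"
      by (rule integral_mult_left_zero)
    also have "(\<integral>x. indicator {a<..} x * (u / (u^2 + x^2)) \<partial>lborel) = pi/2 - arctan (a/u)"
      using X1(2)[OF True a] by (simp add: set_lebesgue_integral_def)
    finally show ?thesis using True by simp
  next
    case False thus ?thesis unfolding f_def by simp
  qed
  have gint: "set_integrable lborel {0<..} (\<lambda>u. (pi/2 - arctan (a/u)) * norm (kern b u))"
  proof (rule dom_int[OF b, where C=pi])
    show "(\<lambda>u. (pi/2 - arctan (a/u)) * norm (kern b u)) \<in> borel_measurable borel" by measurable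
    fix u :: real assume u: "u > 0"
    have "norm ((pi/2 - arctan (a/u)) * norm (kern b u)) = \<bar>pi/2 - arctan (a/u)\<bar> * norm (kern b u)"
      by (simp add: abs_mult)
    also have "\<dots> \<le> pi * Dk b u"
      using arctan_bounded[of "a/u"] Dk_ge[of u b] u by (intro mult_mono) auto
    finally show "norm ((pi/2 - arctan (a/u)) * norm (kern b u)) \<le> pi * Dk b u" .
  qed
  have int: "integrable (lborel \<Otimes>\<^sub>M lborel) (\<lambda>(u,x). f u x)"
  proof (rule lborel_pair.Fubini_integrable)
    show "(\<lambda>(u,x). f u x) \<in> borel_measurable (lborel \<Otimes>\<^sub>M lborel)" by (rule fmeas)
    show "integrable lborel (\<lambda>u. \<integral>x. norm ((\<lambda>(u,x). f u x) (u, x)) \<partial>lborel)"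
      using gint unfolding set_integrable_def by (simp add: norm_inner)
    have "integrable lborel (\<lambda>x. f u x)" for u
    proof (cases "u > 0")
      case True
      have "integrable lborel (\<lambda>x. (indicator {a<..} x * (u / (u^2 + x^2))) *\<^sub>R kern b u)"
        using X1(1)[OF True a] by (intro integrable_scaleR_left) (simp add: set_integrable_def)
      thus ?thesis unfolding f_def using True by simp
    next
      case False thus ?thesis unfolding f_def by simp
    qed
    thus "AE u in lborel. integrable lborel (\<lambda>x. (\<lambda>(u,x). f u x) (u, x))" by simp
  qed
  have "(\<integral>x. (\<integral>u. f u x \<partial>lborel) \<partial>lborel) = (\<integral>u. (\<integral>x. f u x \<partial>lborel) \<partial>lborel)"
    using lborel_pair.Fubini_integral[of f] int by simp
  hence "(\<integral>x. indicator {a<..} x *\<^sub>R (1 / (of_real x + 1/2) - 1 / (of_real x + b)) \<partial>lborel)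
      = (\<integral>u. indicator {0<..} u *\<^sub>R (of_real (arctan (u/a)) * kern b u) \<partial>lborel)"
    unfolding inner1 inner2 .
  thus ?thesis using X2(2)[OF b a] by (simp add: set_lebesgue_integral_def)
qed

lemma g4: fixes U C B p :: complex assumes "U^2 + C \<noteq> 0" "U^2 + B \<noteq> 0"
  shows "U * ((2/p) * (U * (1/(U^2+C)) - U*(1/(U^2+B)))) = (2/p) * (B * (1/(U^2+B)) - C * (1/(U^2+C)))"
  using assms by (simp add: field_simps power2_eq_square)

lemma g5: fixes p b :: complex assumes "p \<noteq> 0" "b \<noteq> 0"
  shows "(2/p) * (b^2 * (p/(2*b)) - (1/2)^2 * (p/(2*(1/2)))) = b - 1/2"
  using assms by (simp add: field_simps power2_eq_square)

lemma L_value: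
  assumes b: "Re b > 0"
  shows "set_integrable lborel {0<..} (\<lambda>u. of_real u * kern b u)"
    and "(LBINT u:{0<..}. of_real u * kern b u) = b - 1/2"
proof -
  have pt: "of_real u * kern b u = (2 / of_real pi) * (b^2 * (1 / (of_real u ^ 2 + b^2)) - (1/2)^2 * (1 / (of_real u ^ 2 + (1/2)^2)))" for u :: real
    unfolding kern_def by (rule g4[OF quarter_nz sq_plus_nz[OF b]])
  have i1: "set_integrable lborel {0<..} (\<lambda>u::real. b^2 * (1 / (of_real u ^ 2 + b^2)))"
    by (rule set_integrable_mult_right) (rule E_integrable[OF b])
  have i2: "set_integrable lborel {0<..} (\<lambda>u::real. (1/2::complex)^2 * (1 / (of_real u ^ 2 + (1/2)^2)))"
    by (rule set_integrable_mult_right) (rule E_integrable[OF half_re])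
  have i: "set_integrable lborel {0<..} (\<lambda>u::real. (2 / of_real pi) * (b^2 * (1 / (of_real u ^ 2 + b^2)) - (1/2)^2 * (1 / (of_real u ^ 2 + (1/2)^2))))"
    by (rule set_integrable_mult_right) (rule set_integral_diff(1)[OF i1 i2])
  show "set_integrable lborel {0<..} (\<lambda>u. of_real u * kern b u)" unfolding pt by (rule i)
  have "(LBINT u:{0<..}. of_real u * kern b u) = (2 / of_real pi) * (b^2 * (of_real pi / (2 * b)) - (1/2)^2 * (of_real pi / (2 * (1/2))))"
    unfolding pt set_integral_mult_right set_integral_diff(2)[OF i1 i2] E_value[OF b] E_value[OF half_re] ..
  also have "\<dots> = b - 1/2" by (rule g5) (use b in auto)
  finally show "(LBINT u:{0<..}. of_real u * kern b u) = b - 1/2" .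
qed

definition tt :: "nat \<Rightarrow> real \<Rightarrow> real" where
  "tt k u = u / (2 * real (Suc k)) - arctan (u / (2 * real (Suc k) + 1 / 2))"

lemma tt_nonneg: "u \<ge> 0 \<Longrightarrow> 0 \<le> tt k u"
proof -
  assume u: "u \<ge> 0"
  have "arctan (u / (2 * real (Suc k) + 1 / 2)) \<le> u / (2 * real (Suc k) + 1 / 2)"
    using u by (intro arctan_le_self) simp
  also have "\<dots> \<le> u / (2 * real (Suc k))" using u by (intro divide_left_mono) auto
  finally show ?thesis unfolding tt_def by simp
qed

lemma sqrt_ge_self: "0 \<le> x \<Longrightarrow> x \<le> 1 \<Longrightarrow> x \<le> sqrt (x::real)"
proof -
  assume x: "0 \<le> x" "x \<le> 1"
  have "x * x \<le> x * 1" using x by (intro mult_left_mono) auto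
  hence "x^2 \<le> x" by (simp add: power2_eq_square)
  thus ?thesis using x by (simp add: real_le_rsqrt)
qed

lemma arctan_gap: assumes y: "y \<ge> 0" shows "y - arctan y \<le> y * sqrt y"
proof (cases "y = 0")
  case True thus ?thesis by simp
next
  case False
  hence y0: "y > 0" using y by simp
  have d: "\<And>x. 0 \<le> x \<Longrightarrow> x \<le> y \<Longrightarrow> ((\<lambda>y. y - arctan y) has_real_derivative 1 - inverse (1 + x^2)) (at x)"
    by (auto intro!: derivative_eq_intros)
  obtain z where z: "0 < z" "z < y" "(y - arctan y) - (0 - arctan 0) = (y - 0) * (1 - inverse (1 + z^2))"
    using MVT2[OF y0 d] by blast
  have nz: "1 + z^2 \<noteq> 0" by (metis add_pos_nonneg zero_le_power2 zero_less_one less_irrefl)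
  have q: "1 - inverse (1 + z^2) = z^2 / (1 + z^2)" using nz by (simp add: field_simps)
  have "z^2 / (1 + z^2) \<le> sqrt z"
  proof (cases "z \<le> 1")
    case True
    have "z^2 / (1 + z^2) \<le> z^2 / 1" by (rule divide_left_mono) (auto intro: add_pos_nonneg)
    hence "z^2 / (1 + z^2) \<le> z^2" by simp
    also have "z^2 \<le> z" using True z by (simp add: power2_eq_square mult_le_one)
    also have "z \<le> sqrt z" using True z by (intro sqrt_ge_self) auto
    finally show ?thesis .
  next
    case False
    have "0 < 1 + z^2" by (intro add_pos_nonneg) auto
    hence "z^2 / (1 + z^2) \<le> 1" by (simp add: divide_le_eq_1)
    also have "1 \<le> sqrt z" using False by simp
    finally show ?thesis .
  qed
  also have "sqrt z \<le> sqrt y" using z by simp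
  finally have "1 - inverse (1 + z^2) \<le> sqrt y" unfolding q .
  hence "y * (1 - inverse (1 + z^2)) \<le> y * sqrt y" using y by (intro mult_left_mono) auto
  thus ?thesis using z(3) by simp
qed

lemma tt_bound:
  assumes u: "u \<ge> 0"
  shows "tt k u \<le> (u + u * sqrt u) * (1 / (real (Suc k) * sqrt (real (Suc k))))"
proof -
  define m where "m = real (Suc k)"
  have m1: "m \<ge> 1" unfolding m_def by simp
  have sm: "sqrt m \<le> m" using m1 by (rule sqrt_le_self')
  have sm0: "sqrt m > 0" using m1 by simp
  define y where "y = u / (2 * m + 1/2)"
  define w where "w = u / m"
  have y0: "y \<ge> 0" unfolding y_def using u m1 by simp
  have yw: "y \<le> w" unfolding y_def w_def using u m1 by (intro divide_left_mono) auto
  have t: "tt k u = (u / (2 * m) - y) + (y - arctan y)" unfolding tt_def y_def m_def by simp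
  have A: "u / (2 * m) - y \<le> u * (1 / (m * sqrt m))"
  proof -
    have "u / (2 * m) - y = u / (2 * m * (4 * m + 1))" unfolding y_def using m1 by (simp add: field_simps)
    also have "\<dots> \<le> u / (m * sqrt m)"
      using u m1 sm sm0 by (intro divide_left_mono mult_mono) (auto intro!: mult_pos_pos)
    finally show ?thesis by simp
  qed
  have B: "y - arctan y \<le> u * sqrt u * (1 / (m * sqrt m))"
  proof -
    have "y - arctan y \<le> y * sqrt y" by (rule arctan_gap[OF y0])
    also have "\<dots> \<le> w * sqrt w" using yw y0 by (intro mult_mono) auto
    also have "\<dots> = u * sqrt u * (1 / (m * sqrt m))" unfolding w_def using m1 by (simp add: real_sqrt_divide)
    finally show ?thesis .
  qed
  have "tt k u \<le> u * (1 / (m * sqrt m)) + u * sqrt u * (1 / (m * sqrt m))" using t A B by linarith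
  also have "\<dots> = (u + u * sqrt u) * (1 / (m * sqrt m))" by (rule distrib_right[symmetric])
  finally show ?thesis unfolding m_def .
qed

definition Ssum :: real where "Ssum = (\<Sum>k. 1 / (real (Suc k) * sqrt (real (Suc k))))"

lemma powr_32: assumes n: "(n::real) > 0" shows "n powr (- (3/2)) = 1 / (n * sqrt n)"
proof -
  have e: "(3/2::real) = 1 + 1/2" by simp
  have "n powr (3/2) = n powr 1 * n powr (1/2)" unfolding e by (rule powr_add)
  also have "\<dots> = n * sqrt n" using n by (simp add: powr_half_sqrt)
  finally have "n powr (3/2) = n * sqrt n" .
  thus ?thesis by (simp only: powr_minus_divide)
qed

lemma summable_S: "summable (\<lambda>k. 1 / (real (Suc k) * sqrt (real (Suc k))))"
proof -
  have "summable (\<lambda>n. real n powr (- (3/2)))" by (rule summable_real_powr_iff[THEN iffD2]) simp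
  hence "summable (\<lambda>k. real (Suc k) powr (- (3/2)))"
    by (rule summable_Suc_iff[where f="\<lambda>n. real n powr (- (3/2))", THEN iffD2])
  moreover have "real (Suc k) powr (- (3/2)) = 1 / (real (Suc k) * sqrt (real (Suc k)))" for k
    by (rule powr_32) simp
  ultimately show ?thesis by simp
qed

lemma tt_summable: "u \<ge> 0 \<Longrightarrow> summable (\<lambda>k. tt k u)"
proof -
  assume u: "u \<ge> 0"
  have s: "summable (\<lambda>k. (u + u * sqrt u) * (1 / (real (Suc k) * sqrt (real (Suc k)))))"
    by (rule summable_mult[OF summable_S])
  show ?thesis
  proof (rule summable_comparison_test'[OF s])
    fix n :: nat assume "n \<ge> 0"
    show "norm (tt n u) \<le> (u + u * sqrt u) * (1 / (real (Suc n) * sqrt (real (Suc n))))"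
      using tt_nonneg[OF u, of n] tt_bound[OF u, of n] by simp
  qed
qed

lemma tt_partial_bound: "u \<ge> 0 \<Longrightarrow> (\<Sum>k<n. tt k u) \<le> (u + u * sqrt u) * Ssum"
proof -
  assume u: "u \<ge> 0"
  have "(\<Sum>k<n. tt k u) \<le> (\<Sum>k<n. (u + u * sqrt u) * (1 / (real (Suc k) * sqrt (real (Suc k)))))"
    by (intro sum_mono tt_bound u)
  also have "\<dots> \<le> (\<Sum>k. (u + u * sqrt u) * (1 / (real (Suc k) * sqrt (real (Suc k)))))"
    using u by (intro sum_le_suminf summable_mult summable_S) auto
  also have "\<dots> = (u + u * sqrt u) * Ssum" unfolding Ssum_def by (rule suminf_mult[OF summable_S])
  finally show ?thesis .
qed

lemma Ssum_nonneg: "Ssum \<ge> 0"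
  unfolding Ssum_def by (intro suminf_nonneg summable_S) auto

lemma KC_kern: "Re s > 1/2 \<Longrightarrow> K_C s u = kern (s - 1/2) u"
proof -
  assume s: "Re s > 1/2"
  have b: "Re (s - 1/2) > 0" using s by simp
  have "(s - 1/2)^2 - 1/4 = s * (s - 1)" by (simp add: algebra_simps power2_eq_square)
  thus ?thesis unfolding K_C_def kern_alt[OF b] by simp
qed

definition th :: "nat \<Rightarrow> real \<Rightarrow> real" where
  "th n u = - arctan (u / (1/2)) - u / 2 * (euler_mascheroni + ln pi) + (\<Sum>k<n. tt k u)"

lemma vartheta_lim: "u \<ge> 0 \<Longrightarrow> (\<lambda>n. th n u) \<longlonglongrightarrow> vartheta u"
proof -
  assume u: "u \<ge> 0"
  have "(\<lambda>n. \<Sum>k<n. tt k u) \<longlonglongrightarrow> (\<Sum>k. tt k u)" by (rule summable_LIMSEQ[OF tt_summable[OF u]])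
  hence "(\<lambda>n. th n u) \<longlonglongrightarrow> - arctan (u / (1/2)) - u / 2 * (euler_mascheroni + ln pi) + (\<Sum>k. tt k u)"
    unfolding th_def by (intro tendsto_intros)
  moreover have "- arctan (u / (1/2)) - u / 2 * (euler_mascheroni + ln pi) + (\<Sum>k. tt k u) = vartheta u"
    unfolding vartheta_def tt_def by (simp add: mult.commute)
  ultimately show ?thesis by simp
qed

lemma th_cont: "continuous_on UNIV (th n)"
  unfolding th_def[abs_def] tt_def by (intro continuous_intros) auto

definition Iv :: "complex \<Rightarrow> nat \<Rightarrow> complex" where
  "Iv b n = - Ln (of_real (1/2) + b) - of_real ((euler_mascheroni + ln pi) / 2) * (b - 1/2)
     + (\<Sum>k<n. of_real (1 / (2 * real (Suc k))) * (b - 1/2)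
          - Ln ((of_real (2 * real (Suc k) + 1/2) + b) / (of_real (2 * real (Suc k) + 1/2) + 1/2)))"

lemma th_integral:
  assumes b: "Re b > 0"
  shows "set_integrable lborel {0<..} (\<lambda>u. of_real (th n u) * kern b u)
     \<and> (LBINT u:{0<..}. of_real (th n u) * kern b u) = Iv b n"
proof (induction n)
  case 0
  have a0: "(0::real) < 1/2" by simp
  have pt: "of_real (th 0 u) * kern b u = (-1) * (of_real (arctan (u / (1/2))) * kern b u)
      - of_real ((euler_mascheroni + ln pi) / 2) * (of_real u * kern b u)" for u
    unfolding th_def by (simp add: algebra_simps)
  have i1: "set_integrable lborel {0<..} (\<lambda>u. (-1) * (of_real (arctan (u / (1/2))) * kern b u))"
    by (rule set_integrable_mult_right) (rule J_int[OF b a0])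
  have i2: "set_integrable lborel {0<..} (\<lambda>u. of_real ((euler_mascheroni + ln pi) / 2) * (of_real u * kern b u))"
    by (rule set_integrable_mult_right) (rule L_value(1)[OF b])
  have "(LBINT u:{0<..}. of_real (th 0 u) * kern b u) =
      (-1) * (LBINT u:{0<..}. of_real (arctan (u / (1/2))) * kern b u) - of_real ((euler_mascheroni + ln pi) / 2) * (LBINT u:{0<..}. of_real u * kern b u)"
    unfolding pt set_integral_diff(2)[OF i1 i2] set_integral_mult_right ..
  also have "\<dots> = Iv b 0" unfolding J_value[OF b a0] L_value(2)[OF b] Iv_def by simp
  finally show ?case using set_integral_diff(1)[OF i1 i2] unfolding pt by simp
next
  case (Suc n)
  define m where "m = real (Suc n)"
  have am: "2 * m + 1/2 > 0" unfolding m_def by simp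
  have pt: "of_real (th (Suc n) u) * kern b u = of_real (th n u) * kern b u
      + (of_real (1 / (2 * m)) * (of_real u * kern b u) - of_real (arctan (u / (2 * m + 1/2))) * kern b u)" for u
    unfolding th_def tt_def m_def by (simp add: algebra_simps)
  have i0: "set_integrable lborel {0<..} (\<lambda>u. of_real (th n u) * kern b u)" using Suc by simp
  have i1: "set_integrable lborel {0<..} (\<lambda>u. of_real (1 / (2 * m)) * (of_real u * kern b u))"
    by (rule set_integrable_mult_right) (rule L_value(1)[OF b])
  have i2: "set_integrable lborel {0<..} (\<lambda>u. of_real (arctan (u / (2 * m + 1/2))) * kern b u)"
    by (rule J_int[OF b am])
  have i12: "set_integrable lborel {0<..} (\<lambda>u. of_real (1 / (2 * m)) * (of_real u * kern b u) - of_real (arctan (u / (2 * m + 1/2))) * kern b u)"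
    by (rule set_integral_diff(1)[OF i1 i2])
  have "(LBINT u:{0<..}. of_real (th (Suc n) u) * kern b u)
      = Iv b n + (of_real (1 / (2 * m)) * (b - 1/2) - Ln ((of_real (2 * m + 1/2) + b) / (of_real (2 * m + 1/2) + 1/2)))"
    unfolding pt set_integral_add(2)[OF i0 i12] set_integral_diff(2)[OF i1 i2] set_integral_mult_right
      L_value(2)[OF b] J_value[OF b am] using Suc by simp
  also have "\<dots> = Iv b (Suc n)" unfolding Iv_def m_def by simp
  finally show ?case using set_integral_add(1)[OF i0 i12] unfolding pt by simp
qed

lemma th_bound:
  assumes u: "u > 0"
  shows "\<bar>th n u\<bar> \<le> (pi/2 + \<bar>euler_mascheroni + ln pi\<bar>/2 + Ssum) * (1 + u + u * sqrt u)"
proof -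
  define C0 where "C0 = euler_mascheroni + ln pi"
  have s0: "sqrt u \<ge> 0" using u by simp
  have uu: "u * sqrt u \<ge> 0" using u by (intro mult_nonneg_nonneg) auto
  have a: "\<bar>arctan (u / (1/2))\<bar> \<le> pi/2" using arctan_bounded[of "u / (1/2)"] by auto
  have b: "\<bar>u / 2 * C0\<bar> = u * (\<bar>C0\<bar>/2)" using u by (simp add: abs_mult)
  have c0: "0 \<le> (\<Sum>k<n. tt k u)" using u by (intro sum_nonneg tt_nonneg) auto
  have c: "(\<Sum>k<n. tt k u) \<le> (u + u * sqrt u) * Ssum" using u by (intro tt_partial_bound) auto
  have "\<bar>th n u\<bar> \<le> \<bar>arctan (u / (1/2))\<bar> + \<bar>u / 2 * C0\<bar> + (\<Sum>k<n. tt k u)"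
    unfolding th_def C0_def using c0 by linarith
  also have "\<dots> \<le> pi/2 + u * (\<bar>C0\<bar>/2) + (u + u * sqrt u) * Ssum" using a b c by linarith
  also have "\<dots> \<le> pi/2 * (1 + u + u * sqrt u) + \<bar>C0\<bar>/2 * (1 + u + u * sqrt u) + Ssum * (1 + u + u * sqrt u)"
  proof -
    have "pi/2 \<le> pi/2 * (1 + u + u * sqrt u)" using u uu by (simp add: mult_le_cancel_left1)
    moreover have "u * (\<bar>C0\<bar>/2) \<le> \<bar>C0\<bar>/2 * (1 + u + u * sqrt u)"
    proof -
      have "u \<le> 1 + u + u * sqrt u" using uu by linarith
      hence "\<bar>C0\<bar>/2 * u \<le> \<bar>C0\<bar>/2 * (1 + u + u * sqrt u)" by (rule mult_left_mono) simp
      thus ?thesis by (simp only: mult.commute)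
    qed
    moreover have "(u + u * sqrt u) * Ssum \<le> Ssum * (1 + u + u * sqrt u)" using Ssum_nonneg
      by (simp add: mult.commute mult_left_mono)
    ultimately show ?thesis by linarith
  qed
  also have "\<dots> = (pi/2 + \<bar>C0\<bar>/2 + Ssum) * (1 + u + u * sqrt u)" by (simp add: algebra_simps)
  finally show ?thesis unfolding C0_def .
qed

lemma main_limit:
  assumes b: "Re b > 0"
  shows "set_integrable lborel {0<..} (\<lambda>u. of_real (vartheta u) * kern b u)"
    and "(\<lambda>n. Iv b n) \<longlonglongrightarrow> (LBINT u:{0<..}. of_real (vartheta u) * kern b u)"
proof -
  define Cm where "Cm = pi/2 + \<bar>euler_mascheroni + ln pi\<bar>/2 + Ssum"
  define sn where "sn n u = indicator {0<..} u *\<^sub>R (of_real (th n u) * kern b u)" for n u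
  define f where "f u = indicator {0<..} u *\<^sub>R (of_real (vartheta u) * kern b u)" for u
  define w where "w u = indicator {0<..} u *\<^sub>R (Cm * Dk b u)" for u
  note km[measurable] = kern_meas[OF b]
  have thmeas[measurable]: "th n \<in> borel_measurable borel" for n
    by (rule borel_measurable_continuous_onI[OF th_cont])
  have snm: "sn n \<in> borel_measurable lborel" for n unfolding sn_def by measurable
  have lim: "(\<lambda>n. sn n u) \<longlonglongrightarrow> f u" for u
  proof (cases "u > 0")
    case True
    have "(\<lambda>n. of_real (th n u) * kern b u) \<longlonglongrightarrow> of_real (vartheta u) * kern b u"
      using vartheta_lim[of u] True by (intro tendsto_intros) auto
    thus ?thesis unfolding sn_def f_def using True by simp
  next
    case False thus ?thesis unfolding sn_def f_def by simp
  qed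
  have fm: "f \<in> borel_measurable lborel"
    by (rule borel_measurable_LIMSEQ_metric[OF snm lim])
  have wi: "integrable lborel w"
    unfolding w_def using set_integrable_mult_right[OF Dk_integrable[OF b], of Cm]
    unfolding set_integrable_def .
  have bnd: "norm (sn n u) \<le> w u" for n u
  proof (cases "u > 0")
    case True
    have "norm (of_real (th n u) * kern b u) = \<bar>th n u\<bar> * norm (kern b u)" by (simp add: norm_mult)
    also have "\<dots> \<le> (Cm * (1 + u + u * sqrt u)) * norm (kern b u)"
      unfolding Cm_def using th_bound[OF True, of n] by (intro mult_right_mono) auto
    also have "\<dots> = Cm * Dk b u" unfolding Dk_def by simp
    finally show ?thesis unfolding sn_def w_def using True by simp
  next
    case False thus ?thesis unfolding sn_def w_def by simp
  qed
  have di: "integrable lborel f"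
    by (rule integrable_dominated_convergence[OF fm snm wi]) (auto intro: lim bnd)
  show "set_integrable lborel {0<..} (\<lambda>u. of_real (vartheta u) * kern b u)"
    using di unfolding f_def set_integrable_def .
  have "(\<lambda>n. integral\<^sup>L lborel (sn n)) \<longlonglongrightarrow> integral\<^sup>L lborel f"
    by (rule integral_dominated_convergence[OF fm snm wi]) (auto intro: lim bnd)
  moreover have "integral\<^sup>L lborel (sn n) = Iv b n" for n
    using th_integral[OF b, of n] unfolding sn_def set_lebesgue_integral_def by simp
  ultimately show "(\<lambda>n. Iv b n) \<longlonglongrightarrow> (LBINT u:{0<..}. of_real (vartheta u) * kern b u)"
    unfolding f_def set_lebesgue_integral_def by simp
qed

lemma rat_gen: fixes D Q R X E :: complex
  assumes "D \<noteq> 0" "Q \<noteq> 0" "R \<noteq> 0" "X \<noteq> 0"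
  shows "(E * X / (Q / D)) / (X / (R / D)) = E / (Q / R)"
  using assms by (simp add: field_simps)

lemma re_pos_nz: "Re (z::complex) > 0 \<Longrightarrow> z \<noteq> 0" by auto

lemma term_ratio:
  fixes M s :: complex
  assumes M: "M \<noteq> 0" and Ms: "2*M + s \<noteq> 0" and M1: "2*M + 1 \<noteq> 0"
  shows "(exp ((s/2)/M) / (1 + (s/2)/M)) / (exp ((1/2)/M) / (1 + (1/2)/M))
       = exp ((s - 1)/(2*M)) / ((2*M + s)/(2*M + 1))"
proof -
  have a: "(s - 1)/(2*M) + (1/2)/M = (s/2)/M" using M by (simp add: field_simps)
  have e: "exp ((s/2)/M) = exp ((s - 1)/(2*M)) * exp ((1/2)/M)" unfolding a[symmetric] by (rule exp_add)
  have f1: "1 + (s/2)/M = (2*M + s)/(2*M)" using M by (simp add: field_simps)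
  have f2: "1 + (1/2)/M = (2*M + 1)/(2*M)" using M by (simp add: field_simps)
  define E where "E = exp ((s - 1)/(2*M))"
  define X where "X = exp ((1/2)/M)"
  have X: "X \<noteq> 0" unfolding X_def by simp
  have D: "2 * M \<noteq> 0" using M by simp
  have "(E * X / ((2*M + s)/(2*M))) / (X / ((2*M + 1)/(2*M))) = E / ((2*M + s)/(2*M + 1))"
    by (rule rat_gen[OF D Ms M1 X])
  thus ?thesis unfolding e f1 f2 E_def X_def .
qed

lemma r_nz:
  assumes s: "Re s > 1/2"
  shows "(of_real (2 * real (Suc k) + 1/2) + (s - 1/2)) / (of_real (2 * real (Suc k) + 1/2) + 1/2) \<noteq> (0::complex)"
proof -
  have "Re (of_real (2 * real (Suc k) + 1/2) + (s - 1/2)) > 0" using s by simp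
  hence "of_real (2 * real (Suc k) + 1/2) + (s - 1/2) \<noteq> 0" by (rule re_pos_nz)
  moreover have "Re (of_real (2 * real (Suc k) + 1/2) + 1/2 :: complex) > 0" by simp
  hence "(of_real (2 * real (Suc k) + 1/2) + 1/2 :: complex) \<noteq> 0" by (rule re_pos_nz)
  ultimately show ?thesis by simp
qed

lemma exp_Iv:
  assumes s: "Re s > 1/2"
  shows "exp (Iv (s - 1/2) n) = exp (- of_real (ln pi / 2) * (s - 1))
     * (Gamma_series_Weierstrass (s/2) n / Gamma_series_Weierstrass (1/2) n)"
proof -
  have s0: "s \<noteq> 0" using s by auto
  define A where "A k = of_real (1 / (2 * real (Suc k))) * ((s - 1/2) - 1/2)" for k
  define r where "r k = (of_real (2 * real (Suc k) + 1/2) + (s - 1/2)) / (of_real (2 * real (Suc k) + 1/2) + 1/2 :: complex)" for k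
  define g where "g z k = exp (z / of_nat k) / (1 + z / of_nat k)" for z :: complex and k :: nat
  define P where "P = (\<Prod>k<n. exp (A k) / r k)"
  define B where "B = - of_real ((euler_mascheroni + ln pi) / 2) * (s - 1)"
  define E1 where "E1 = exp (- of_real (ln pi / 2) * (s - 1))"
  define E2 where "E2 = exp (- euler_mascheroni * ((s - 1)/2))"
  have rnz: "r k \<noteq> 0" for k unfolding r_def by (rule r_nz[OF s])
  have "exp (\<Sum>k<n. A k - Ln (r k)) = (\<Prod>k<n. exp (A k - Ln (r k)))" by (rule exp_sum) simp
  also have "\<dots> = P" unfolding P_def using rnz by (simp add: exp_diff)
  finally have ES: "exp (\<Sum>k<n. A k - Ln (r k)) = P" .
  have e1: "of_real (1/2) + (s - 1/2) = s" by simp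
  have Ivf: "Iv (s - 1/2) n = - Ln s + B + (\<Sum>k<n. A k - Ln (r k))"
    unfolding Iv_def A_def r_def e1 B_def by simp
  have EL: "exp (- Ln s) = 1 / s" using s0 by (simp add: exp_minus exp_Ln divide_inverse)
  have EB: "exp B = E1 * E2"
  proof -
    have "B = - of_real (ln pi / 2) * (s - 1) + - euler_mascheroni * ((s - 1)/2)"
      unfolding B_def by (simp add: of_real_euler_mascheroni field_simps)
    thus ?thesis unfolding E1_def E2_def by (simp only: exp_add)
  qed
  have L: "exp (Iv (s - 1/2) n) = (1/s) * (E1 * E2) * P"
    unfolding Ivf exp_add EL EB ES ..
  have pr: "(\<Prod>k=1..n. g (s/2) k) / (\<Prod>k=1..n. g (1/2) k) = P"
  proof -
    have "(\<Prod>k=1..n. g (s/2) k) / (\<Prod>k=1..n. g (1/2) k) = (\<Prod>k=1..n. g (s/2) k / g (1/2) k)"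
      by (rule prod_dividef[symmetric])
    also have "\<dots> = (\<Prod>k<n. g (s/2) (Suc k) / g (1/2) (Suc k))"
      using prod.atLeast1_atMost_eq[of "\<lambda>k. g (s/2) k / g (1/2) k" n] by simp
    also have "\<dots> = P" unfolding P_def
    proof (rule prod.cong[OF refl])
      fix k assume "k \<in> {..<n}"
      define M where "M = (of_nat (Suc k) :: complex)"
      have M: "M \<noteq> 0" unfolding M_def by (rule of_nat_neq_0)
      have Ms: "2*M + s \<noteq> 0"
      proof -
        have "Re (2*M + s) > 0" unfolding M_def using s by simp
        thus ?thesis by (rule re_pos_nz)
      qed
      have M1: "2*M + 1 \<noteq> 0"
      proof -
        have "Re (2*M + 1) > 0" unfolding M_def by simp
        thus ?thesis by (rule re_pos_nz)
      qed
      have "g (s/2) (Suc k) / g (1/2) (Suc k) = exp ((s - 1)/(2*M)) / ((2*M + s)/(2*M + 1))"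
        unfolding g_def M_def[symmetric] by (rule term_ratio[OF M Ms M1])
      also have "(s - 1)/(2*M) = A k"
      proof -
        have "(of_real (1 / (2 * real (Suc k))) :: complex) = 1 / (2 * M)" unfolding M_def by simp
        moreover have "(s - 1/2) - 1/2 = s - 1" by simp
        ultimately show ?thesis unfolding A_def by simp
      qed
      also have "(2*M + s)/(2*M + 1) = r k"
      proof -
        have "(of_real (2 * real (Suc k) + 1/2) :: complex) = 2 * M + 1/2" unfolding M_def by simp
        moreover have "2 * M + 1/2 + (s - 1/2) = 2*M + s" by simp
        moreover have "2 * M + 1/2 + 1/2 = 2*M + (1::complex)" by simp
        ultimately show ?thesis unfolding r_def by simp
      qed
      finally show "g (s/2) (Suc k) / g (1/2) (Suc k) = exp (A k) / r k" .
    qed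
    finally show ?thesis .
  qed
  have C: "(exp (- euler_mascheroni * (s/2)) / (s/2)) / (exp (- euler_mascheroni * (1/2)) / (1/2)) = E2 / s"
  proof -
    have "- euler_mascheroni * (s/2) = - euler_mascheroni * ((s - 1)/2) + - euler_mascheroni * (1/2 :: complex)"
      by (simp add: field_simps)
    hence ex: "exp (- euler_mascheroni * (s/2)) = E2 * exp (- euler_mascheroni * (1/2 :: complex))"
      unfolding E2_def by (simp only: exp_add)
    have gen: "\<And>E X :: complex. X \<noteq> 0 \<Longrightarrow> (E * X / (s/2)) / (X / (1/2)) = E / s"
      using s0 by (simp add: field_simps)
    show ?thesis unfolding ex by (rule gen) simp
  qed
  have "Gamma_series_Weierstrass (s/2) n / Gamma_series_Weierstrass (1/2) n
      = ((exp (- euler_mascheroni * (s/2)) / (s/2)) / (exp (- euler_mascheroni * (1/2)) / (1/2)))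
        * ((\<Prod>k=1..n. g (s/2) k) / (\<Prod>k=1..n. g (1/2) k))"
    unfolding Gamma_series_Weierstrass_def g_def by (simp only: times_divide_times_eq)
  also have "\<dots> = E2 / s * P" unfolding C pr ..
  finally have R: "Gamma_series_Weierstrass (s/2) n / Gamma_series_Weierstrass (1/2) n = E2 / s * P" .
  have fin: "(1/s) * (E1 * E2) * P = E1 * (E2 / s * P)" by (simp add: divide_inverse mult_ac)
  have "exp (Iv (s - 1/2) n) = E1 * (Gamma_series_Weierstrass (s/2) n / Gamma_series_Weierstrass (1/2) n)"
    unfolding L R by (rule fin)
  thus ?thesis unfolding E1_def .
qed

theorem mainTheorem6:
  fixes s :: complex
  assumes "Re s > 1 / 2"
  shows "set_integrable lborel {0<..} (\<lambda>u. complex_of_real (vartheta u) * K_C s u)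
    \<and> exp (LBINT u:{0<..}. complex_of_real (vartheta u) * K_C s u)
        = Gamma (s / 2) * complex_of_real pi powr (- s / 2)"
proof -
  have s: "Re s > 1/2" using assms by simp
  define b where "b = s - 1/2"
  have b: "Re b > 0" unfolding b_def using s by simp
  have K: "K_C s = kern b" unfolding b_def by (rule ext, rule KC_kern[OF s])
  define I where "I = (LBINT u:{0<..}. complex_of_real (vartheta u) * kern b u)"
  have lim: "(\<lambda>n. exp (Iv b n)) \<longlonglongrightarrow> exp I"
    unfolding I_def by (intro tendsto_exp main_limit(2)[OF b])
  have G12: "Gamma (1/2 :: complex) \<noteq> 0" by (simp add: Gamma_one_half_complex)
  have lim2: "(\<lambda>n. exp (Iv b n)) \<longlonglongrightarrow> exp (- of_real (ln pi / 2) * (s - 1)) * (Gamma (s/2) / Gamma (1/2))"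
  proof -
    have "(\<lambda>n. exp (- of_real (ln pi / 2) * (s - 1)) * (Gamma_series_Weierstrass (s/2) n / Gamma_series_Weierstrass (1/2) n))
        \<longlonglongrightarrow> exp (- of_real (ln pi / 2) * (s - 1)) * (Gamma (s/2) / Gamma (1/2))"
      by (intro tendsto_intros Gamma_Weierstrass_complex G12)
    thus ?thesis unfolding b_def exp_Iv[OF s] .
  qed
  have eq: "exp I = exp (- of_real (ln pi / 2) * (s - 1)) * (Gamma (s/2) / Gamma (1/2))"
    using LIMSEQ_unique[OF lim lim2] .
  have sq: "(of_real (sqrt pi) :: complex) = exp (of_real (ln pi / 2))"
  proof -
    have "sqrt pi = pi powr (1/2)" by (simp add: powr_half_sqrt)
    also have "\<dots> = exp (ln pi / 2)" by (simp add: powr_def)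
    finally show ?thesis by (simp only: exp_of_real)
  qed
  have pw: "complex_of_real pi powr (- s / 2) = exp ((- s / 2) * of_real (ln pi))"
    by (simp add: powr_def Ln_of_real)
  have "exp (- of_real (ln pi / 2) * (s - 1)) * (Gamma (s/2) / Gamma (1/2))
      = Gamma (s/2) * (exp (- of_real (ln pi / 2) * (s - 1)) / exp (of_real (ln pi / 2)))"
    unfolding Gamma_one_half_complex sq by simp
  also have "exp (- of_real (ln pi / 2) * (s - 1)) / exp (of_real (ln pi / 2)) = exp ((- s / 2) * of_real (ln pi))"
  proof -
    have "- of_real (ln pi / 2) * (s - 1) - of_real (ln pi / 2) = (- s / 2) * (of_real (ln pi) :: complex)"
      by (simp add: field_simps)
    thus ?thesis by (simp only: exp_diff[symmetric])
  qed
  finally have "exp I = Gamma (s / 2) * complex_of_real pi powr (- s / 2)" unfolding eq pw .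
  moreover have "set_integrable lborel {0<..} (\<lambda>u. complex_of_real (vartheta u) * kern b u)"
    by (rule main_limit(1)[OF b])
  ultimately show ?thesis unfolding K I_def by simp
qed

end
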